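(* Let $p\ge 7$ be a prime and $k=(p-1)/2$. Then $\mathsf{BO}(k,\mathbb{Z}/p\mathbb{Z})=k+1$ if the multiplicative order of $2$ modulo $p$ is odd, and $\mathsf{BO}(k,\mathbb{Z}/p\mathbb{Z})=k+2$ if the multiplicative order of $2$ modulo $p$ is even.
   Context: For a positive integer $k$, a set $\{g_1,\dots,g_k\}$ of $k$ distinct elements of a finite abelian group $G$ (written additively) is called $k$-barycentric if $\sum_{i=1}^k g_i = k\,g_j$ for some $1\le j\le k$. The $k$-th barycentric Olson constant $\mathsf{BO}(k,G)$ is the smallest integer $\ell$ such that every subset $A\subseteq G$ with $|A|\ge \ell$ contains a $k$-barycentric subset (so that always $\mathsf{BO}(k,G)\le |G|+1$). The multiplicative order of $2$ modulo $p$ is the least positive integer $t$ with $2^t\equiv 1 \pmod p$. *)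

theory Defs
  imports "HOL-Algebra.Algebra" "HOL-Number_Theory.Number_Theory"
begin

text \<open>A finite abelian group G is written multiplicatively here (HOL-Algebra convention);
  the group operation plays the role of the additive law of the paper.\<close>

definition barycentric :: "('a, 'b) monoid_scheme \<Rightarrow> nat \<Rightarrow> 'a set \<Rightarrow> bool" where
  "barycentric G k S \<longleftrightarrow> S \<subseteq> carrier G \<and> finite S \<and> card S = k \<and>
     (\<exists>g\<in>S. finprod G (\<lambda>x. x) S = g [^]\<^bsub>G\<^esub> k)"

definition BO :: "nat \<Rightarrow> ('a, 'b) monoid_scheme \<Rightarrow> nat" where
  "BO k G = (LEAST l. \<forall>A. A \<subseteq> carrier G \<and> card A \<ge> l \<longrightarrow>
                          (\<exists>S\<subseteq>A. barycentric G k S))"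

definition Zmod :: "int \<Rightarrow> int monoid" where
  "Zmod p = add_monoid (residue_ring p)"

end

theory Submission
  imports Defs
begin

lemma Zmod_carrier: "carrier (Zmod p) = {0..p-1}" by (simp add: Zmod_def residue_ring_def)

lemma Zmod_pow: "(g::int) [^]\<^bsub>Zmod p\<^esub> (n::nat) = (int n * g) mod p"
proof (induction n)
  case 0
  then show ?case by (simp add: Zmod_def residue_ring_def)
next
  case (Suc n)
  then show ?case by (simp add: Zmod_def residue_ring_def mod_add_right_eq algebra_simps)
qed

lemma Zmod_prod:
  assumes "p > 1" "finite S" "S \<subseteq> {0..p-1}"
  shows "finprod (Zmod p) (\<lambda>x. x) S = (\<Sum>S) mod p"
proof -
  interpret residues p "residue_ring p" by (unfold_locales) (use assms in auto)
  have "(\<Oplus>\<^bsub>residue_ring p\<^esub> i\<in>S. i mod p) = (\<Oplus>\<^bsub>residue_ring p\<^esub> i\<in>S. i)"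
    by (rule finsum_cong') (use assms in \<open>auto simp: res_carrier_eq\<close>)
  then have "finprod (Zmod p) (\<lambda>x. x) S = (\<Oplus>\<^bsub>residue_ring p\<^esub> i\<in>S. i mod p)"
    unfolding Zmod_def finsum_def by simp
  also have "\<dots> = (\<Sum>S) mod p" using sum_cong[OF assms(2), of "\<lambda>x. x"] by simp
  finally show ?thesis .
qed

definition good :: "int \<Rightarrow> nat \<Rightarrow> int set \<Rightarrow> bool" where
  "good p k A \<longleftrightarrow> (\<exists>S\<subseteq>A. card S = k \<and> (\<exists>g\<in>S. p dvd (g + 2 * \<Sum>S)))"

lemma cong_key:
  fixes p g s :: int
  assumes "p = 2 * int k + 1"
  shows "(s mod p = (int k * g) mod p) \<longleftrightarrow> p dvd (g + 2 * s)"
proof -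
  have "s mod p = (int k * g) mod p \<longleftrightarrow> p dvd (s - int k * g)"
    by (simp add: mod_eq_dvd_iff)
  also have "\<dots> \<longleftrightarrow> p dvd (g + 2 * s)"
  proof
    assume "p dvd (s - int k * g)"
    then have "p dvd (2 * (s - int k * g) + p * g)" by (metis dvd_add dvd_mult dvd_triv_left)
    moreover have "2 * (s - int k * g) + p * g = g + 2 * s" using assms by (simp add: algebra_simps)
    ultimately show "p dvd (g + 2 * s)" by metis
  next
    assume "p dvd (g + 2 * s)"
    then have "p dvd (- int k * (g + 2 * s) + p * s)" by (metis dvd_add dvd_mult dvd_triv_left)
    moreover have "- int k * (g + 2 * s) + p * s = s - int k * g" using assms by (simp add: algebra_simps)
    ultimately show "p dvd (s - int k * g)" by metis
  qed
  finally show ?thesis .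
qed

lemma bary_good:
  fixes p :: int
  assumes "p = 2 * int k + 1" "k \<ge> 1" "A \<subseteq> {0..p-1}"
  shows "(\<exists>S\<subseteq>A. barycentric (Zmod p) k S) \<longleftrightarrow> good p k A"
proof -
  have p1: "p > 1" using assms by simp
  have "barycentric (Zmod p) k S \<longleftrightarrow> card S = k \<and> (\<exists>g\<in>S. p dvd (g + 2 * \<Sum>S))" if "S \<subseteq> A" for S
  proof -
    have S: "S \<subseteq> {0..p-1}" "finite S" using that assms(3) by (auto intro: finite_subset[OF _ finite_atLeastAtMost_int])
    show ?thesis
      unfolding barycentric_def Zmod_carrier Zmod_prod[OF p1 S(2) S(1)] Zmod_pow
      using S cong_key[OF assms(1)] by auto
  qed
  then show ?thesis unfolding good_def by auto
qed

lemma good_mono: "good p k A \<Longrightarrow> A \<subseteq> B \<Longrightarrow> good p k B"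
  unfolding good_def by blast

lemma range_eq:
  fixes p x y :: int
  assumes "x \<in> {0..p-1}" "y \<in> {0..p-1}" "p dvd (x - y)"
  shows "x = y"
proof -
  have "x mod p = x" "y mod p = y" using assms by auto
  then show ?thesis using assms(3) by (metis mod_eq_dvd_iff)
qed

lemma mul_inj:
  fixes p c x y e :: int
  assumes "Factorial_Ring.prime p" "\<not> p dvd c" "x \<in> {0..p-1}" "y \<in> {0..p-1}"
    "(c * x + e) mod p = (c * y + e) mod p"
  shows "x = y"
proof -
  have "p dvd ((c * x + e) - (c * y + e))" using assms(5) by (simp add: mod_eq_dvd_iff)
  then have "p dvd c * (x - y)" by (simp add: algebra_simps)
  then have "p dvd (x - y)" using assms(1,2) by (simp add: prime_dvd_mult_iff)
  then show ?thesis using range_eq assms by blast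
qed

lemma mod_in_range: "(p::int) > 1 \<Longrightarrow> x mod p \<in> {0..p-1}" by auto

lemma card_range: "(p::int) \<ge> 1 \<Longrightarrow> card {0..p-1} = nat p" by simp



lemma dvd_mod_diff: "(p::int) dvd (x mod p - x)"
  by (metis mod_mod_trivial mod_eq_dvd_iff)

lemma modF: "(x::int) \<in> {0..p-1} \<Longrightarrow> x mod p = x" by auto

context
  fixes p :: int and k :: nat
  assumes pr: "Factorial_Ring.prime p" and pk: "p = 2 * int k + 1" and k3: "k \<ge> 3"
begin

lemma p1: "p > 1" using pk k3 by simp
lemma not_dvd2: "\<not> p dvd 2"
proof
  assume "p dvd 2" then have "p \<le> 2" by (simp add: zdvd_imp_le)
  then show False using pk k3 by simp
qed

lemma finF: "A \<subseteq> {0..p-1} \<Longrightarrow> finite A"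
  by (auto intro: finite_subset[OF _ finite_atLeastAtMost_int])

lemma cardF: "card ({0..p-1} - {u}) = 2 * k" if "u \<in> {0..p-1}"
proof -
  have "card {0..p-1} = 2 * k + 1" using pk by simp
  then show ?thesis using that by (simp add: card_Diff_singleton)
qed

lemma bad_k1:
  assumes A: "A \<subseteq> {0..p-1}" "card A = k+1" and bad: "\<not> good p k A"
  shows "(2*\<Sum>A) mod p \<in> A"
    and "\<forall>y\<in>{0..p-1}. y \<notin> A \<longrightarrow> (2*y - (2*\<Sum>A) mod p) mod p \<in> A"
    and "\<forall>a\<in>A. a \<noteq> (2*\<Sum>A) mod p \<longrightarrow> (2*a - (2*\<Sum>A) mod p) mod p \<notin> A"
proof -
  define u where "u = (2*\<Sum>A) mod p"
  define f where "f = (\<lambda>x. (2*x - u) mod p)"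
  define F where "F = {0..p-1}"
  have finA: "finite A" using finF A by blast
  have uF: "u \<in> F" unfolding u_def F_def using p1 by auto
  have fF: "f x \<in> F" for x unfolding f_def F_def using p1 by auto
  have finj: "x = y" if "x \<in> F" "y \<in> F" "f x = f y" for x y
    using mul_inj[OF pr not_dvd2, of x y "-u"] that unfolding f_def F_def by simp
  have fu: "f u = u" unfolding f_def using uF unfolding F_def by auto
  have key: "f a \<notin> A" if "a \<in> A" "a \<noteq> u" for a
  proof
    assume fa: "f a \<in> A"
    have aF: "a \<in> F" using that A unfolding F_def by auto
    have "f a \<noteq> a"
    proof
      assume "f a = a"
      then have "(2*a - u) mod p = a mod p" using aF modF unfolding f_def F_def by simp
      then have "p dvd ((2*a - u) - a)" by (simp add: mod_eq_dvd_iff)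
      then have "p dvd (a - u)" by simp
      then show False using range_eq[of a p u] aF uF that(2) unfolding F_def by auto
    qed
    define S where "S = A - {a}"
    have S: "S \<subseteq> A" "card S = k" "f a \<in> S" using fa \<open>f a \<noteq> a\<close> A that unfolding S_def by auto
    have sumS: "\<Sum>S = \<Sum>A - a" unfolding S_def using finA that(1) by (simp add: sum_diff1)
    have d1: "p dvd (f a - (2*a - u))" unfolding f_def by (rule dvd_mod_diff)
    have d2: "p dvd (u - 2*\<Sum>A)" unfolding u_def by (rule dvd_mod_diff)
    have "f a + 2 * \<Sum>S = (f a - (2*a - u)) - (u - 2*\<Sum>A)" unfolding sumS by (simp add: algebra_simps)
    then have "p dvd (f a + 2 * \<Sum>S)" using d1 d2 by (metis dvd_diff)
    then have "good p k A" unfolding good_def using S by blast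
    then show False using bad by blast
  qed
  define Z where "Z = A - {u}"
  have finZ: "finite Z" unfolding Z_def using finA by blast
  have Zsub: "Z \<subseteq> F - {u}" unfolding Z_def F_def using A by auto
  have fZsub: "f ` Z \<subseteq> F - {u}"
  proof
    fix y assume "y \<in> f ` Z"
    then obtain z where z: "z \<in> Z" "y = f z" by blast
    have zF: "z \<in> F" "z \<noteq> u" using z Zsub by auto
    have "f z \<noteq> u" using finj[of z u] fu zF uF by auto
    then show "y \<in> F - {u}" using fF z by auto
  qed
  have disj: "Z \<inter> f ` Z = {}" using key unfolding Z_def by auto
  have injZ: "inj_on f Z" using finj Zsub by (meson DiffD1 inj_onI subsetD)
  have cU: "card (Z \<union> f ` Z) = 2 * card Z"
    using card_Un_disjoint[OF finZ finite_imageI[OF finZ] disj] card_image[OF injZ] by simp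
  have cFu: "card (F - {u}) = 2 * k" using cardF uF unfolding F_def by blast
  have le: "card (Z \<union> f ` Z) \<le> 2 * k"
    using card_mono[of "F - {u}" "Z \<union> f ` Z"] Zsub fZsub cFu unfolding F_def by auto
  have ge: "card Z \<ge> k" unfolding Z_def using A(2) finA by (simp add: card_Diff_singleton_if)
  have cZ: "card Z = k" using le ge cU by simp
  show uA: "(2*\<Sum>A) mod p \<in> A"
  proof (rule ccontr)
    assume "(2*\<Sum>A) mod p \<notin> A"
    then have "Z = A" unfolding Z_def u_def by auto
    then show False using cZ A(2) by simp
  qed
  have eqU: "Z \<union> f ` Z = F - {u}"
    by (rule card_subset_eq) (use Zsub fZsub cFu cU cZ F_def in auto)
  show "\<forall>y\<in>{0..p-1}. y \<notin> A \<longrightarrow> (2*y - (2*\<Sum>A) mod p) mod p \<in> A"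
  proof (intro ballI impI)
    fix y assume y: "y \<in> {0..p-1}" "y \<notin> A"
    have yu: "y \<noteq> u" using uA y unfolding u_def by auto
    have fyu: "f y \<noteq> u" using finj[of y u] fu y yu uF unfolding F_def by auto
    show "(2*y - (2*\<Sum>A) mod p) mod p \<in> A"
    proof (rule ccontr)
      assume "(2*y - (2*\<Sum>A) mod p) mod p \<notin> A"
      then have "f y \<notin> Z" unfolding f_def u_def Z_def by auto
      moreover have "f y \<in> F - {u}" using fF fyu by auto
      ultimately have "f y \<in> f ` Z" using eqU by auto
      then obtain z where z: "z \<in> Z" "f y = f z" by blast
      then have "y = z" using finj[of y z] y Zsub unfolding F_def by auto
      then show False using z y unfolding Z_def by auto
    qed
  qed
  show "\<forall>a\<in>A. a \<noteq> (2*\<Sum>A) mod p \<longrightarrow> (2*a - (2*\<Sum>A) mod p) mod p \<notin> A"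
    using key unfolding f_def u_def by auto
qed


lemma odd_good:
  assumes t: "odd t" "p dvd (2^t - 1)" and A: "A \<subseteq> {0..p-1}" "card A = k+1"
  shows "good p k A"
proof (rule ccontr)
  assume bad: "\<not> good p k A"
  define u where "u = (2*\<Sum>A) mod p"
  note B = bad_k1[OF A bad, folded u_def]
  have finA: "finite A" using finF A by blast
  have uF: "u \<in> {0..p-1}" unfolding u_def using p1 by auto
  have "card (A - {u}) \<ge> k" using A(2) finA by (simp add: card_Diff_singleton_if)
  then have "card (A - {u}) > 0" using k3 by linarith
  then have "A - {u} \<noteq> {}" by (metis card.empty less_irrefl)
  then obtain a where a: "a \<in> A" "a \<noteq> u" by blast
  have aF: "a \<in> {0..p-1}" using a A by auto
  define x where "x j = (u + 2^j*(a-u)) mod p" for j :: nat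
  have xF: "x j \<in> {0..p-1}" for j unfolding x_def using p1 by auto
  have xstep: "x (Suc j) = (2 * x j - u) mod p" for j
  proof -
    have "(2 * x j - u) mod p = (2 * (u + 2^j*(a-u)) - u) mod p"
      unfolding x_def by (metis mod_diff_left_eq mod_mult_right_eq)
    also have "2 * (u + 2^j*(a-u)) - u = u + 2^(Suc j)*(a-u)" by (simp add: algebra_simps)
    finally show ?thesis unfolding x_def by simp
  qed
  have finj2: "v = w" if "v \<in> {0..p-1}" "w \<in> {0..p-1}" "(2 * v - u) mod p = (2 * w - u) mod p" for v w
    using mul_inj[OF pr not_dvd2, of v w "-u"] that by simp
  have inv: "(even j \<longrightarrow> x j \<in> A \<and> x j \<noteq> u) \<and> (odd j \<longrightarrow> x j \<notin> A)" for j
  proof (induction j)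
    case 0
    have "x 0 = a" unfolding x_def using aF by simp
    then show ?case using a by simp
  next
    case (Suc j)
    show ?case
    proof (cases "even j")
      case True
      then have "x j \<in> A" "x j \<noteq> u" using Suc by auto
      then have "x (Suc j) \<notin> A" using B(3) xstep by auto
      then show ?thesis using True by simp
    next
      case False
      then have xj: "x j \<notin> A" using Suc by auto
      then have in1: "x (Suc j) \<in> A" using B(2) xstep xF by auto
      have "x (Suc j) \<noteq> u"
      proof
        assume "x (Suc j) = u"
        moreover have "(2 * u - u) mod p = u" using uF by simp
        ultimately have "(2 * x j - u) mod p = (2 * u - u) mod p" using xstep by simp
        then have "x j = u" using finj2 xF uF by blast
        then show False using xj B(1) by simp
      qed
      then show ?thesis using False in1 by simp
    qed
  qed
  have "x t \<notin> A" using inv t(1) by blast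
  moreover have "x t = a"
  proof -
    have "p dvd ((2^t - 1) * (a - u))" using t(2) by simp
    moreover have "(2^t - 1) * (a - u) = (u + 2^t*(a-u)) - (u + (a - u))" by (simp add: algebra_simps)
    ultimately have "(u + 2^t*(a-u)) mod p = (u + (a - u)) mod p" by (metis mod_eq_dvd_iff)
    then show ?thesis unfolding x_def using aF by simp
  qed
  ultimately show False using a by simp
qed

lemma upper2:
  assumes A: "A \<subseteq> {0..p-1}" "card A = k+2"
  shows "good p k A"
proof (rule ccontr)
  assume bad: "\<not> good p k A"
  have finA: "finite A" using finF A by blast
  have E: "p dvd (\<Sum>A + int (k+2) * (2*y - 2*\<Sum>A))" if y: "y \<in> {0..p-1}" "y \<notin> A" for y
  proof -
    define h where "h z = (2*z + (2*y - 2*\<Sum>A)) mod p" for z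
    have hA: "h z \<in> A" if "z \<in> A" for z
    proof -
      have Ac: "A - {z} \<subseteq> {0..p-1}" "card (A - {z}) = k+1" using A that finA by auto
      have badc: "\<not> good p k (A - {z})" using bad good_mono by blast
      have "(2*y - (2*\<Sum>(A - {z})) mod p) mod p \<in> A - {z}" using bad_k1(2)[OF Ac badc] y by auto
      moreover have "(2*y - (2*\<Sum>(A - {z})) mod p) mod p = h z"
      proof -
        have s: "\<Sum>(A - {z}) = \<Sum>A - z" using finA that by (simp add: sum_diff1)
        have "(2*y - (2*\<Sum>(A - {z})) mod p) mod p = (2*y - 2*\<Sum>(A - {z})) mod p"
          by (simp add: mod_diff_right_eq)
        also have "2*y - 2*\<Sum>(A - {z}) = 2*z + (2*y - 2*\<Sum>A)" unfolding s by (simp add: algebra_simps)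
        finally show ?thesis unfolding h_def .
      qed
      ultimately show ?thesis by auto
    qed
    have hinj: "inj_on h A"
    proof (rule inj_onI)
      fix v w assume vw: "v \<in> A" "w \<in> A" "h v = h w"
      then have "v \<in> {0..p-1}" "w \<in> {0..p-1}" using A by auto
      then show "v = w" using mul_inj[OF pr not_dvd2, of v w "2*y - 2*\<Sum>A"] vw(3) unfolding h_def by blast
    qed
    have himg: "h ` A = A"
      by (rule card_subset_eq[OF finA]) (use hA card_image[OF hinj] in auto)
    have s1: "\<Sum>A = (\<Sum>z\<in>A. h z)"
      using sum.reindex[OF hinj, of "\<lambda>x. x"] himg by simp
    have "p dvd (\<Sum>z\<in>A. h z - (2*z + (2*y - 2*\<Sum>A)))"
      by (rule dvd_sum) (simp add: h_def dvd_mod_diff)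
    moreover have "(\<Sum>z\<in>A. h z - (2*z + (2*y - 2*\<Sum>A))) = - (\<Sum>A + int (k+2) * (2*y - 2*\<Sum>A))"
      unfolding sum_subtractf sum.distrib s1[symmetric]
      using A(2) sum_distrib_right[of "\<lambda>z. z" A 2] by (simp add: sum_distrib_left[symmetric] algebra_simps)
    ultimately have "p dvd - (\<Sum>A + int (k+2) * (2*y - 2*\<Sum>A))" by metis
    then show ?thesis by (simp only: dvd_minus_iff)
  qed
  have cF: "card ({0..p-1} - A) = k - 1"
    using A pk by (simp add: card_Diff_subset finA)
  then have "card ({0..p-1} - A) \<ge> 2" using k3 by simp
  then obtain T where T: "T \<subseteq> {0..p-1} - A" "card T = 2" by (metis obtain_subset_with_card_n)
  then obtain y1 y2 where y: "T = {y1, y2}" "y1 \<noteq> y2" by (meson card_2_iff)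
  have y1: "y1 \<in> {0..p-1}" "y1 \<notin> A" and y2: "y2 \<in> {0..p-1}" "y2 \<notin> A" using T y by auto
  have "p dvd ((\<Sum>A + int (k+2) * (2*y1 - 2*\<Sum>A)) - (\<Sum>A + int (k+2) * (2*y2 - 2*\<Sum>A)))"
    using E[OF y1] E[OF y2] by (rule dvd_diff)
  moreover have "(\<Sum>A + int (k+2) * (2*y1 - 2*\<Sum>A)) - (\<Sum>A + int (k+2) * (2*y2 - 2*\<Sum>A))
      = int (k+2) * (2 * (y1 - y2))" by (simp add: algebra_simps)
  ultimately have d: "p dvd int (k+2) * (2 * (y1 - y2))" by simp
  have n1: "\<not> p dvd int (k+2)"
  proof
    assume "p dvd int (k+2)"
    then have "p \<le> int (k+2)" by (simp add: zdvd_imp_le)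
    then show False using pk k3 by simp
  qed
  have "p dvd (2 * (y1 - y2))" using d n1 pr prime_dvd_mult_iff by blast
  then have "p dvd (y1 - y2)" using not_dvd2 pr prime_dvd_mult_iff by blast
  then have "y1 = y2" using range_eq y1 y2 by blast
  then show False using y by simp
qed

end


context
  fixes p :: int and k :: nat
  assumes pr: "Factorial_Ring.prime p" and pk: "p = 2 * int k + 1" and k3: "k \<ge> 3"
begin

lemma p1': "p > 1" using pk k3 by simp

lemma ndx: "x \<in> {1..p-1} \<Longrightarrow> \<not> p dvd x"
  using zdvd_imp_le by fastforce

lemma D_props:
  fixes m :: int and s :: nat
  assumes m: "p dvd (m^s + 1)" "p dvd (4^s - 1)"
  defines "D \<equiv> {x \<in> {1..p-1}. (x^s) mod p \<le> int k}"
  shows "card D = k" "p dvd \<Sum>D" "D \<subseteq> {1..p-1}" "\<forall>x\<in>D. (m*x) mod p \<notin> D"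
proof -
  have ndm: "\<not> p dvd m"
  proof
    assume pm: "p dvd m"
    show False
    proof (cases "s = 0")
      case True
      then show False using m(1) not_dvd2[OF pr pk k3] by simp
    next
      case False
      then have "m dvd m^s" by (simp add: dvd_power)
      then have "p dvd m^s" using pm by (rule dvd_trans[rotated])
      then have "p dvd 1" using m(1) by (metis dvd_add_right_iff)
      then show False using pr by (simp add: prime_int_iff)
    qed
  qed
  have nd4: "\<not> p dvd 4"
  proof
    assume "p dvd 4" then have "p \<le> 4" by (simp add: zdvd_imp_le)
    then show False using pk k3 by simp
  qed
  have rr: "x^s mod p \<in> {1..p-1}" if "x \<in> {1..p-1}" for x
  proof -
    have "\<not> p dvd x^s" using ndx[OF that] pr prime_dvd_power by blast
    then have "x^s mod p \<noteq> 0" by (simp add: dvd_eq_mod_eq_0)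
    moreover have "x^s mod p \<in> {0..p-1}" using p1' by auto
    ultimately show ?thesis by auto
  qed
  have mulr: "(c*x) mod p \<in> {1..p-1}" if "x \<in> {1..p-1}" "\<not> p dvd c" for c x
  proof -
    have "\<not> p dvd c*x" using ndx[OF that(1)] that(2) pr prime_dvd_mult_iff by blast
    then have "(c*x) mod p \<noteq> 0" by (simp add: dvd_eq_mod_eq_0)
    moreover have "(c*x) mod p \<in> {0..p-1}" using p1' by auto
    ultimately show ?thesis by auto
  qed
  have powm: "((m*x) mod p)^s mod p = p - x^s mod p" if "x \<in> {1..p-1}" for x
  proof -
    have "((m*x) mod p)^s mod p = (m^s * x^s) mod p" by (simp add: power_mod power_mult_distrib)
    also have "\<dots> = (- (x^s)) mod p"
    proof -
      have "p dvd ((m^s + 1) * x^s)" using m(1) by simp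
      moreover have "(m^s + 1) * x^s = m^s * x^s - (- (x^s))" by (simp add: algebra_simps)
      ultimately show ?thesis by (metis mod_eq_dvd_iff)
    qed
    also have "\<dots> = p - x^s mod p" using rr[OF that] by (simp add: zmod_zminus1_eq_if)
    finally show ?thesis .
  qed
  have pow4: "((4*x) mod p)^s mod p = x^s mod p" for x
  proof -
    have "((4*x) mod p)^s mod p = (4^s * x^s) mod p" by (simp add: power_mod power_mult_distrib)
    also have "\<dots> = x^s mod p"
    proof -
      have "p dvd ((4^s - 1) * x^s)" using m(2) by simp
      moreover have "(4^s - 1) * x^s = 4^s * x^s - x^s" by (simp add: algebra_simps)
      ultimately show ?thesis by (metis mod_eq_dvd_iff)
    qed
    finally show ?thesis .
  qed
  show Dsub: "D \<subseteq> {1..p-1}" unfolding D_def by auto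
  have finD: "finite D" using Dsub by (auto intro: finite_subset[OF _ finite_atLeastAtMost_int])
  define C where "C = {1..p-1} - D"
  have finC: "finite C" unfolding C_def by simp
  have swap1: "(m*x) mod p \<notin> D" if "x \<in> D" for x
    using that powm[of x] pk unfolding D_def by auto
  then show "\<forall>x\<in>D. (m*x) mod p \<notin> D" by blast
  have swap2: "(m*x) mod p \<in> D" if "x \<in> C" for x
  proof -
    have x: "x \<in> {1..p-1}" "x^s mod p > int k" using that unfolding C_def D_def by auto
    show ?thesis using powm[OF x(1)] x pk mulr[OF x(1) ndm] unfolding D_def by auto
  qed
  have ginj: "inj_on (\<lambda>x. (m*x) mod p) {1..p-1}"
  proof (rule inj_onI)
    fix v w assume vw: "v \<in> {1..p-1}" "w \<in> {1..p-1}" "(m*v) mod p = (m*w) mod p"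
    then show "v = w" using mul_inj[OF pr ndm, of v w 0] by auto
  qed
  have c1: "card D \<le> card C"
    by (rule card_inj_on_le[OF inj_on_subset[OF ginj Dsub] _ finC])
       (use swap1 Dsub mulr[OF _ ndm] in \<open>auto simp: C_def\<close>)
  have c2: "card C \<le> card D"
    by (rule card_inj_on_le[OF inj_on_subset[OF ginj] _ finD]) (use swap2 in \<open>auto simp: C_def\<close>)
  have "card D + card C = card {1..p-1}" unfolding C_def using Dsub finD
    by (metis card_Diff_subset card_mono diff_add_inverse finite_atLeastAtMost_int le_add_diff_inverse)
  also have "card {1..p-1} = 2 * k" using pk by simp
  finally show cD: "card D = k" using c1 c2 by simp
  have qinj: "inj_on (\<lambda>x. (4*x) mod p) D"
  proof (rule inj_onI)
    fix v w assume vw: "v \<in> D" "w \<in> D" "(4*v) mod p = (4*w) mod p"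
    then have "v \<in> {0..p-1}" "w \<in> {0..p-1}" using Dsub by auto
    then show "v = w" using mul_inj[OF pr nd4, of v w 0] vw(3) by auto
  qed
  have qD: "(4*x) mod p \<in> D" if "x \<in> D" for x
    using that pow4[of x] mulr[of x 4] nd4 Dsub unfolding D_def by auto
  have qimg: "(\<lambda>x. (4*x) mod p) ` D = D"
    by (rule card_subset_eq[OF finD]) (use qD card_image[OF qinj] in auto)
  have s1: "\<Sum>D = (\<Sum>x\<in>D. (4*x) mod p)"
    using sum.reindex[OF qinj, of "\<lambda>x. x"] qimg by simp
  have "p dvd (\<Sum>x\<in>D. (4*x) mod p - 4*x)"
    by (rule dvd_sum) (simp add: dvd_mod_diff)
  moreover have "(\<Sum>x\<in>D. (4*x) mod p - 4*x) = - (3 * \<Sum>D)"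
    unfolding sum_subtractf s1[symmetric] by (simp add: sum_distrib_left[symmetric])
  ultimately have "p dvd (3 * \<Sum>D)" by (metis dvd_minus_iff)
  moreover have "\<not> p dvd 3"
  proof
    assume "p dvd 3" then have "p \<le> 3" by (simp add: zdvd_imp_le)
    then show False using pk k3 by simp
  qed
  ultimately show "p dvd \<Sum>D" using pr prime_dvd_mult_iff by blast
qed


lemma wit_k:
  fixes m :: int and s :: nat
  assumes m: "p dvd (m^s + 1)" "p dvd (4^s - 1)"
  shows "\<exists>A. A \<subseteq> {0..p-1} \<and> card A = k \<and> \<not> good p k A"
proof -
  define D where "D = {x \<in> {1..p-1}. (x^s) mod p \<le> int k}"
  note DP = D_props[OF m, folded D_def]
  have finD: "finite D" using DP(3) by (auto intro: finite_subset[OF _ finite_atLeastAtMost_int])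
  have "\<not> good p k D"
  proof
    assume "good p k D"
    then obtain S g where S: "S \<subseteq> D" "card S = k" "g \<in> S" "p dvd (g + 2 * \<Sum>S)"
      unfolding good_def by blast
    have "S = D" using card_subset_eq[OF finD S(1)] S(2) DP(1) by simp
    then have "p dvd 2 * \<Sum>S" using DP(2) by simp
    then have "p dvd g" using S(4) by (metis dvd_add_left_iff)
    moreover have "g \<in> {1..p-1}" using S(1,3) DP(3) by auto
    ultimately show False using ndx by blast
  qed
  moreover have "D \<subseteq> {0..p-1}" using DP(3) by auto
  ultimately show ?thesis using DP(1) by blast
qed

lemma wit_k1:
  fixes s :: nat
  assumes m: "p dvd (2^s + 1)" "p dvd (4^s - 1)"
  shows "\<exists>A. A \<subseteq> {0..p-1} \<and> card A = k + 1 \<and> \<not> good p k A"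
proof -
  define D where "D = {x \<in> {1..p-1}. (x^s) mod p \<le> int k}"
  note DP = D_props[OF m, folded D_def]
  have finD: "finite D" using DP(3) by (auto intro: finite_subset[OF _ finite_atLeastAtMost_int])
  define B where "B = insert 0 D"
  have finB: "finite B" unfolding B_def using finD by simp
  have D0: "0 \<notin> D" using DP(3) by auto
  have cB: "card B = k + 1" unfolding B_def using finD D0 DP(1) by simp
  have sB: "\<Sum>B = \<Sum>D" unfolding B_def using finD D0 by simp
  have "\<not> good p k B"
  proof
    assume "good p k B"
    then obtain S g where S: "S \<subseteq> B" "card S = k" "g \<in> S" "p dvd (g + 2 * \<Sum>S)"
      unfolding good_def by blast
    have "B - S \<noteq> {}"
    proof
      assume "B - S = {}"
      then have "B \<subseteq> S" by auto
      then have "card B \<le> card S" using finB S(1) by (simp add: card_mono finite_subset)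
      then show False using cB S(2) by simp
    qed
    then obtain a where a: "a \<in> B" "a \<notin> S" by blast
    have "S \<subseteq> B - {a}" using S(1) a by auto
    moreover have "card (B - {a}) = k" using cB a finB by simp
    ultimately have SB: "S = B - {a}" using card_subset_eq[of "B - {a}" S] finB S(2) by simp
    have sS: "\<Sum>S = \<Sum>D - a" unfolding SB using sB finB a(1) by (simp add: sum_diff1)
    have "p dvd (g + 2 * \<Sum>S) - 2 * \<Sum>D" using S(4) DP(2) by (simp add: dvd_diff)
    then have gd: "p dvd (g - 2 * a)" unfolding sS by (simp add: algebra_simps)
    show False
    proof (cases "a = 0")
      case True
      then have "g \<in> D" using S(1,3) a B_def SB by auto
      moreover have "p dvd g" using gd True by simp
      ultimately show False using ndx DP(3) by blast
    next
      case False
      then have aD: "a \<in> D" using a(1) B_def by auto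
      have gB: "g \<in> {0..p-1}" using S(1,3) DP(3) p1' unfolding B_def by fastforce
      have "g mod p = (2 * a) mod p" using gd by (simp add: mod_eq_dvd_iff)
      then have "g = (2 * a) mod p" using gB by simp
      then have "g \<notin> D" using DP(4) aD by simp
      then have "g = 0" using S(1,3) B_def by auto
      then have "p dvd 2 * a" using gd by simp
      then have "p dvd a" using pr not_dvd2[OF pr pk k3] prime_dvd_mult_iff by blast
      then show False using ndx aD DP(3) by blast
    qed
  qed
  moreover have "B \<subseteq> {0..p-1}" using DP(3) p1' unfolding B_def by auto
  ultimately show ?thesis using cB by blast
qed

end


lemma cong1_iff: "[(a::nat) = 1] (mod n) \<longleftrightarrow> int n dvd int a - 1"
  by (metis cong_int_iff cong_iff_dvd_diff of_nat_1)

lemma sq_root: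
  fixes P x :: int
  assumes "Factorial_Ring.prime P" "P dvd x^2 - 1" "\<not> P dvd x - 1"
  shows "P dvd x + 1"
proof -
  have "x^2 - 1 = (x - 1) * (x + 1)" by (simp add: algebra_simps power2_eq_square)
  then show ?thesis using assms prime_dvd_mult_iff by metis
qed

lemma BO_eq:
  fixes p :: int
  assumes pk: "p = 2*int k + 1" "k \<ge> 1"
   and up: "\<And>A. A \<subseteq> {0..p-1} \<Longrightarrow> card A = n \<Longrightarrow> good p k A"
   and low: "\<exists>A. A \<subseteq> {0..p-1} \<and> card A = n - 1 \<and> \<not> good p k A"
   and n1: "n \<ge> 1"
  shows "BO k (Zmod p) = n"
  unfolding BO_def
proof (rule Least_equality)
  show "\<forall>A. A \<subseteq> carrier (Zmod p) \<and> n \<le> card A \<longrightarrow> (\<exists>S\<subseteq>A. barycentric (Zmod p) k S)"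
  proof (intro allI impI)
    fix A assume A: "A \<subseteq> carrier (Zmod p) \<and> n \<le> card A"
    then have AF: "A \<subseteq> {0..p-1}" by (simp add: Zmod_carrier)
    obtain T where T: "T \<subseteq> A" "card T = n" using A by (metis obtain_subset_with_card_n)
    have "good p k T" using up T AF by blast
    then have "good p k A" using T good_mono by blast
    then show "\<exists>S\<subseteq>A. barycentric (Zmod p) k S" using bary_good[OF pk AF] by blast
  qed
next
  fix l assume Q: "\<forall>A. A \<subseteq> carrier (Zmod p) \<and> l \<le> card A \<longrightarrow> (\<exists>S\<subseteq>A. barycentric (Zmod p) k S)"
  show "n \<le> l"
  proof (rule ccontr)
    assume "\<not> n \<le> l"
    then have ln: "l \<le> n - 1" by simp
    obtain A where A: "A \<subseteq> {0..p-1}" "card A = n - 1" "\<not> good p k A" using low by blast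
    have "\<exists>S\<subseteq>A. barycentric (Zmod p) k S" using Q A ln by (simp add: Zmod_carrier)
    then show False using bary_good[OF pk A(1)] A(3) by blast
  qed
qed

theorem mainTheorem7:
  fixes p :: nat
  assumes "Factorial_Ring.prime p" and "p \<ge> 7"
  defines "k \<equiv> (p - 1) div 2"
  shows "(odd (ord p 2) \<longrightarrow> BO k (Zmod (int p)) = k + 1) \<and>
         (even (ord p 2) \<longrightarrow> BO k (Zmod (int p)) = k + 2)"
proof -
  define P where "P = int p"
  have prP: "Factorial_Ring.prime P" unfolding P_def using assms(1) by (simp add: prime_nat_int_transfer)
  have "2 < p" using assms(2) by simp
  then have oddp: "odd p" using prime_odd_nat[OF assms(1)] by blast
  from oddp obtain q where q: "p = 2*q+1" by (rule oddE)
  have kq: "k = q" unfolding k_def q by simp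
  have pk: "P = 2 * int k + 1" unfolding P_def kq q by simp
  have k3: "k \<ge> 3" unfolding k_def using assms(2) by simp
  have pk2: "p - 1 = 2 * k" unfolding kq q by simp
  define t where "t = ord p 2"
  have cop: "coprime p 2" using oddp by simp
  have tpos: "t > 0" unfolding t_def using cop by simp
  have t1: "[2^t = 1] (mod p)" unfolding t_def using ord_works by blast
  then have tP: "P dvd 2^t - 1" using cong1_iff[of "2^t" p] unfolding P_def by simp
  have four: "(4::int)^s = 2^(2*s)" for s :: nat by (simp add: power_mult)
  have odd_case: "BO k (Zmod P) = k + 1" if ot: "odd t"
  proof (rule BO_eq[OF pk])
    show "k \<ge> 1" using k3 by simp
    show "\<And>A. A \<subseteq> {0..P-1} \<Longrightarrow> card A = k + 1 \<Longrightarrow> good P k A"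
      using odd_good[OF prP pk k3 ot tP] by blast
    obtain g where g: "residue_primroot p g" by (metis assms(1) prime_gt_1_nat prime_primitive_root_exists)
    have og: "ord p g = 2 * k" using g assms(1) pk2 by (simp add: residue_primroot_def totient_prime)
    have "[g^(2*k) = 1] (mod p)" using ord_works[of g p] og by simp
    then have a1: "P dvd int g ^ (2*k) - 1" using cong1_iff[of "g^(2*k)" p] unfolding P_def by simp
    have "\<not> [g^k = 1] (mod p)" using ord_minimal[of k p g] og k3 by simp
    then have a2: "\<not> P dvd int g ^ k - 1" using cong1_iff[of "g^k" p] unfolding P_def by simp
    have a3: "P dvd (int g ^ k)^2 - 1" using a1 by (simp add: power_mult[symmetric] mult.commute)
    have m1: "P dvd int g ^ k + 1" using sq_root[OF prP a3 a2] .
    have "\<not> p dvd 2"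
    proof
      assume "p dvd 2" then have "p \<le> 2" by (simp add: dvd_imp_le)
      then show False using assms(2) by simp
    qed
    then have "[2^(p-1) = 1] (mod p)" using fermat_theorem[OF assms(1)] by blast
    then have "P dvd 2^(2*k) - 1" using cong1_iff[of "2^(p-1)" p] pk2 unfolding P_def by simp
    then have m2: "P dvd 4^k - 1" using four by simp
    show "\<exists>A. A \<subseteq> {0..P-1} \<and> card A = k + 1 - 1 \<and> \<not> good P k A"
      using wit_k[OF prP pk k3 m1 m2] by simp
  qed simp
  have even_case: "BO k (Zmod P) = k + 2" if et: "even t"
  proof (rule BO_eq[OF pk])
    show "k \<ge> 1" using k3 by simp
    show "\<And>A. A \<subseteq> {0..P-1} \<Longrightarrow> card A = k + 2 \<Longrightarrow> good P k A"
      using upper2[OF prP pk k3] by blast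
    define s where "s = t div 2"
    have ts: "t = 2 * s" unfolding s_def using et by simp
    have s0: "0 < s" "s < t" using ts tpos by auto
    have "\<not> [2^s = 1] (mod p)" using ord_minimal[of s p 2] s0 unfolding t_def by simp
    then have a2: "\<not> P dvd 2 ^ s - 1" using cong1_iff[of "2^s" p] unfolding P_def by simp
    have a3: "P dvd (2 ^ s)^2 - 1" using tP ts by (simp add: power_mult[symmetric] mult.commute)
    have m1: "P dvd 2 ^ s + 1" using sq_root[OF prP a3 a2] .
    have m2: "P dvd 4^s - 1" using four tP ts by simp
    show "\<exists>A. A \<subseteq> {0..P-1} \<and> card A = k + 2 - 1 \<and> \<not> good P k A"
      using wit_k1[OF prP pk k3 m1 m2] by simp
  qed simp
  show ?thesis using odd_case even_case unfolding t_def P_def by blast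
qed


end
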